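(* Let $\Omega_1,\Omega_2\subset\mathbb{R}^n$ be nearly convex sets and $\varepsilon\geq 0$. If $\mathrm{ri}\,\Omega_1\cap\mathrm{ri}\,\Omega_2\neq \emptyset$, then for each $\bar x\in \Omega_1\cap\Omega_2$, $$N_\varepsilon(\bar x; \Omega_1\cap\Omega_2)=\bigcup_{\substack{\varepsilon_1\geq 0,\ \varepsilon_2\geq 0,\\ \varepsilon_1+\varepsilon_2=\varepsilon}}\big[N_{\varepsilon_1} (\bar x; \Omega_1)+N_{\varepsilon_2} (\bar x; \Omega_2)\big].$$
   Context: A set $D$ is nearly convex if there is a convex $E$ with $E\subset D\subset\overline{E}$. $\mathrm{ri}\,D=\{a\in D\mid\exists\delta>0,\ B(a;\delta)\cap\mathrm{aff}\,D\subset D\}$. For nonempty $\Omega\subset\mathbb{R}^n$, $\bar x\in\Omega$ and $\varepsilon\ge0$, the $\varepsilon$-normal set is $N_\varepsilon(\bar x;\Omega)=\{\xi\in\mathbb{R}^n\mid\langle\xi,x-\bar x\rangle\le\varepsilon\ \forall x\in\Omega\}$. Sums of sets are Minkowski sums. *)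

theory Defs
  imports "HOL-Analysis.Analysis"
begin

definition nearly_convex :: "'a::euclidean_space set \<Rightarrow> bool" where
  "nearly_convex D \<longleftrightarrow> (\<exists>E. convex E \<and> E \<subseteq> D \<and> D \<subseteq> closure E)"

definition eps_normal :: "real \<Rightarrow> 'a::euclidean_space \<Rightarrow> 'a set \<Rightarrow> 'a set" where
  "eps_normal \<epsilon> xbar \<Omega> = {\<xi>. \<forall>x\<in>\<Omega>. inner \<xi> (x - xbar) \<le> \<epsilon>}"

end

theory Submission
  imports Defs
begin

lemma sep0:
  fixes S :: "'a::euclidean_space set"
  assumes "convex S" "S \<noteq> {}" "0 \<notin> S"
  shows "\<exists>a. a \<noteq> 0 \<and> (\<forall>z\<in>S. 0 \<le> inner a z) \<and> (\<exists>z\<in>S. 0 < inner a z)"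
proof (cases "0 \<in> closure S")
  case True
  have "0 \<notin> rel_interior S" using assms(3) rel_interior_subset by blast
  then obtain a where a: "a \<noteq> 0" "\<And>y. y \<in> closure S \<Longrightarrow> inner a 0 \<le> inner a y"
     "\<And>y. y \<in> rel_interior S \<Longrightarrow> inner a 0 < inner a y"
    using supporting_hyperplane_relative_frontier[OF assms(1) True] by blast
  obtain z where z: "z \<in> rel_interior S" using rel_interior_eq_empty assms(1,2) by blast
  have "z \<in> S" using z rel_interior_subset by blast
  moreover have "\<forall>y\<in>S. 0 \<le> inner a y"
  proof
    fix y assume "y \<in> S"
    then have "y \<in> closure S" using closure_subset by blast
    then show "0 \<le> inner a y" using a(2) by simp
  qed
  moreover have "0 < inner a z" using a(3)[OF z] by simp
  ultimately show ?thesis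
    using a(1) by blast
next
  case False
  then obtain a b where ab: "inner a 0 < b" "\<forall>x\<in>closure S. inner a x > b"
    using separating_hyperplane_closed_point[OF convex_closure[OF assms(1)] closed_closure] by blast
  obtain z where z: "z \<in> S" using assms(2) by blast
  have ge: "\<forall>y\<in>S. b < inner a y" using ab(2) closure_subset by blast
  have "a \<noteq> 0" using ab(1) ge z by auto
  then show ?thesis using ge z ab(1) by (metis inner_zero_right less_le_not_le less_trans order_less_imp_le)
qed
lemma ri_nc:
  fixes E :: "'a::euclidean_space set"
  assumes "convex E" "E \<subseteq> \<Omega>" "\<Omega> \<subseteq> closure E"
  shows "rel_interior \<Omega> \<subseteq> rel_interior E"
proof -
  have "affine hull \<Omega> = affine hull (closure E)"
    by (metis assms(2,3) closure_same_affine_hull hull_mono subset_antisym)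
  then have "rel_interior \<Omega> \<subseteq> rel_interior (closure E)"
    using rel_interior_mono assms(3) by blast
  then show ?thesis using convex_rel_interior_closure[OF assms(1)] by simp
qed

lemma ri_step:
  fixes E :: "'a::euclidean_space set"
  assumes "x0 \<in> rel_interior E" "x1 \<in> E"
  shows "\<exists>d>0. x0 - d *\<^sub>R (x1 - x0) \<in> E"
proof -
  obtain e where e: "e > 0" "ball x0 e \<inter> affine hull E \<subseteq> E"
    using assms(1) mem_rel_interior_ball by blast
  have x0: "x0 \<in> E" using assms(1) rel_interior_subset by blast
  define d where "d = e / (norm (x1 - x0) + 1)"
  have np: "norm (x1 - x0) + 1 > 0" by (smt (verit) norm_ge_zero)
  then have d: "d > 0" using e unfolding d_def by (intro divide_pos_pos)
  have "x0 + (-d) *\<^sub>R (x1 - x0) \<in> affine hull E"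
    by (rule mem_affine_3_minus) (auto intro: hull_inc x0 assms(2))
  then have A: "x0 - d *\<^sub>R (x1 - x0) \<in> affine hull E" by simp
  have "d * norm (x1 - x0) < d * (norm (x1 - x0) + 1)" using d by simp
  also have "\<dots> = e" unfolding d_def using np by simp
  finally have "dist x0 (x0 - d *\<^sub>R (x1 - x0)) < e"
    using d by (simp add: dist_norm)
  then have "x0 - d *\<^sub>R (x1 - x0) \<in> ball x0 e" by simp
  then have "x0 - d *\<^sub>R (x1 - x0) \<in> E" using e(2) A by blast
  then show ?thesis using d by blast
qed


theorem mainTheorem5:
  fixes \<Omega>1 \<Omega>2 :: "(real ^ 'n) set" and \<epsilon> :: real and xbar :: "real ^ 'n"
  assumes "nearly_convex \<Omega>1" and "nearly_convex \<Omega>2" and "\<epsilon> \<ge> 0"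
    and "rel_interior \<Omega>1 \<inter> rel_interior \<Omega>2 \<noteq> {}"
    and "xbar \<in> \<Omega>1 \<inter> \<Omega>2"
  shows "eps_normal \<epsilon> xbar (\<Omega>1 \<inter> \<Omega>2) =
    (\<Union>(\<epsilon>1, \<epsilon>2) \<in> {(a, b). a \<ge> 0 \<and> b \<ge> 0 \<and> a + b = \<epsilon>}.
        {u + v | u v. u \<in> eps_normal \<epsilon>1 xbar \<Omega>1 \<and> v \<in> eps_normal \<epsilon>2 xbar \<Omega>2})"
proof
  show "(\<Union>(\<epsilon>1, \<epsilon>2) \<in> {(a, b). a \<ge> 0 \<and> b \<ge> 0 \<and> a + b = \<epsilon>}.
        {u + v | u v. u \<in> eps_normal \<epsilon>1 xbar \<Omega>1 \<and> v \<in> eps_normal \<epsilon>2 xbar \<Omega>2})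
        \<subseteq> eps_normal \<epsilon> xbar (\<Omega>1 \<inter> \<Omega>2)"
  proof
    fix \<xi> assume "\<xi> \<in> (\<Union>(\<epsilon>1, \<epsilon>2) \<in> {(a, b). a \<ge> 0 \<and> b \<ge> 0 \<and> a + b = \<epsilon>}.
        {u + v | u v. u \<in> eps_normal \<epsilon>1 xbar \<Omega>1 \<and> v \<in> eps_normal \<epsilon>2 xbar \<Omega>2})"
    then obtain e1 e2 u v where h: "e1 + e2 = \<epsilon>" "\<xi> = u + v"
      "u \<in> eps_normal e1 xbar \<Omega>1" "v \<in> eps_normal e2 xbar \<Omega>2" by blast
    show "\<xi> \<in> eps_normal \<epsilon> xbar (\<Omega>1 \<inter> \<Omega>2)"
      unfolding eps_normal_def
    proof (intro CollectI ballI)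
      fix x assume x: "x \<in> \<Omega>1 \<inter> \<Omega>2"
      have "inner u (x - xbar) \<le> e1" using h(3) x unfolding eps_normal_def by blast
      moreover have "inner v (x - xbar) \<le> e2" using h(4) x unfolding eps_normal_def by blast
      ultimately show "inner \<xi> (x - xbar) \<le> \<epsilon>" using h(1,2) by (simp add: inner_add_left)
    qed
  qed
next
  obtain E1 where E1: "convex E1" "E1 \<subseteq> \<Omega>1" "\<Omega>1 \<subseteq> closure E1"
    using assms(1) unfolding nearly_convex_def by blast
  obtain E2 where E2: "convex E2" "E2 \<subseteq> \<Omega>2" "\<Omega>2 \<subseteq> closure E2"
    using assms(2) unfolding nearly_convex_def by blast
  obtain x0 where x0: "x0 \<in> rel_interior \<Omega>1" "x0 \<in> rel_interior \<Omega>2" using assms(4) by blast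
  have x0r1: "x0 \<in> rel_interior E1" using ri_nc[OF E1] x0 by blast
  have x0r2: "x0 \<in> rel_interior E2" using ri_nc[OF E2] x0 by blast
  have x0E1: "x0 \<in> E1" using x0r1 rel_interior_subset by blast
  have x0E2: "x0 \<in> E2" using x0r2 rel_interior_subset by blast
  show "eps_normal \<epsilon> xbar (\<Omega>1 \<inter> \<Omega>2) \<subseteq> (\<Union>(\<epsilon>1, \<epsilon>2) \<in> {(a, b). a \<ge> 0 \<and> b \<ge> 0 \<and> a + b = \<epsilon>}.
        {u + v | u v. u \<in> eps_normal \<epsilon>1 xbar \<Omega>1 \<and> v \<in> eps_normal \<epsilon>2 xbar \<Omega>2})"
  proof
    fix \<xi> assume "\<xi> \<in> eps_normal \<epsilon> xbar (\<Omega>1 \<inter> \<Omega>2)"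
    then have h\<xi>: "\<And>x. x \<in> \<Omega>1 \<Longrightarrow> x \<in> \<Omega>2 \<Longrightarrow> inner \<xi> (x - xbar) \<le> \<epsilon>"
      unfolding eps_normal_def by blast
    define D1 :: "((real ^ 'n) \<times> real) set" where
      "D1 = {(x, t). x \<in> E1 \<and> t \<le> inner \<xi> (x - xbar) - \<epsilon>}"
    define D2 :: "((real ^ 'n) \<times> real) set" where "D2 = E2 \<times> {0<..}"
    have cD1: "convex D1"
      unfolding convex_def
    proof (intro ballI allI impI)
      fix p q :: "(real ^ 'n) \<times> real" and u v :: real
      assume p: "p \<in> D1" and q: "q \<in> D1" and uv: "0 \<le> u" "0 \<le> v" "u + v = 1"
      obtain x t where pxt: "p = (x, t)" by (cases p)
      obtain y s where qys: "q = (y, s)" by (cases q)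
      have x: "x \<in> E1" "t \<le> inner \<xi> (x - xbar) - \<epsilon>" using p pxt D1_def by auto
      have y: "y \<in> E1" "s \<le> inner \<xi> (y - xbar) - \<epsilon>" using q qys D1_def by auto
      have m: "u *\<^sub>R x + v *\<^sub>R y \<in> E1" using convexD[OF E1(1) x(1) y(1) uv] by simp
      have xb: "xbar = u *\<^sub>R xbar + v *\<^sub>R xbar" using uv(3) by (metis scaleR_add_left scaleR_one)
      have eq2: "inner \<xi> (u *\<^sub>R x + v *\<^sub>R y - xbar) - \<epsilon>
          = u * (inner \<xi> (x - xbar) - \<epsilon>) + v * (inner \<xi> (y - xbar) - \<epsilon>)"
      proof -
        have eq': "u *\<^sub>R x + v *\<^sub>R y - xbar = u *\<^sub>R (x - xbar) + v *\<^sub>R (y - xbar)"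
          by (subst (1) xb) (simp add: algebra_simps)
        have i: "inner \<xi> (u *\<^sub>R x + v *\<^sub>R y - xbar) = u * inner \<xi> (x - xbar) + v * inner \<xi> (y - xbar)"
          unfolding eq' by (simp add: inner_add_right)
        have e: "u * \<epsilon> + v * \<epsilon> = \<epsilon>" using uv(3) by (metis distrib_right mult_1)
        have "u * (inner \<xi> (x - xbar) - \<epsilon>) + v * (inner \<xi> (y - xbar) - \<epsilon>)
            = u * inner \<xi> (x - xbar) + v * inner \<xi> (y - xbar) - (u * \<epsilon> + v * \<epsilon>)"
          by (simp add: algebra_simps)
        then show ?thesis using i e by linarith
      qed
      have "u * t \<le> u * (inner \<xi> (x - xbar) - \<epsilon>)" using x(2) uv(1) by (rule mult_left_mono)
      moreover have "v * s \<le> v * (inner \<xi> (y - xbar) - \<epsilon>)" using y(2) uv(2) by (rule mult_left_mono)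
      ultimately have "u * t + v * s \<le> inner \<xi> (u *\<^sub>R x + v *\<^sub>R y - xbar) - \<epsilon>"
        unfolding eq2 by linarith
      then show "u *\<^sub>R p + v *\<^sub>R q \<in> D1" using m pxt qys D1_def by simp
    qed
    have cD2: "convex D2" unfolding D2_def by (intro convex_Times E2(1) convex_real_interval)
    define S where "S = (\<Union>p\<in>D1. \<Union>q\<in>D2. {p - q})"
    have cS: "convex S" unfolding S_def by (rule convex_differences[OF cD1 cD2])
    have "(x0, inner \<xi> (x0 - xbar) - \<epsilon>) \<in> D1" using x0E1 D1_def by simp
    moreover have "(x0, 1) \<in> D2" using x0E2 D2_def by simp
    ultimately have "(x0, inner \<xi> (x0 - xbar) - \<epsilon>) - (x0, 1) \<in> S" unfolding S_def by blast
    then have neS: "S \<noteq> {}" by blast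
    have nz: "0 \<notin> S"
    proof
      assume "0 \<in> S"
      then obtain p q where pq: "p \<in> D1" "q \<in> D2" "0 = p - q" unfolding S_def by blast
      then have "p = q" by simp
      then obtain x t where "x \<in> E1" "x \<in> E2" "t \<le> inner \<xi> (x - xbar) - \<epsilon>" "t > 0"
        using pq D1_def D2_def by auto
      moreover have "inner \<xi> (x - xbar) \<le> \<epsilon>" using h\<xi> calculation E1(2) E2(2) by blast
      ultimately show False by linarith
    qed
    obtain a where a: "a \<noteq> 0" "\<forall>z\<in>S. 0 \<le> inner a z" "\<exists>z\<in>S. 0 < inner a z"
      using sep0[OF cS neS nz] by blast
    obtain w \<gamma> where aw: "a = (w, \<gamma>)" by (cases a)
    have key: "0 \<le> inner w (x - y) + \<gamma> * (inner \<xi> (x - xbar) - \<epsilon> - s)"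
      if "x \<in> E1" "y \<in> E2" "s > 0" for x y s
    proof -
      have "(x, inner \<xi> (x - xbar) - \<epsilon>) \<in> D1" using that D1_def by simp
      moreover have "(y, s) \<in> D2" using that D2_def by simp
      ultimately have "(x, inner \<xi> (x - xbar) - \<epsilon>) - (y, s) \<in> S" unfolding S_def by blast
      then have "0 \<le> inner a ((x, inner \<xi> (x - xbar) - \<epsilon>) - (y, s))" using a(2) by blast
      then show ?thesis unfolding aw by (simp add: algebra_simps)
    qed
    obtain x1 y1 t1 s1 where z1: "x1 \<in> E1" "y1 \<in> E2" "0 < inner w (x1 - y1) + \<gamma> * (t1 - s1)"
    proof -
      obtain z where z: "z \<in> S" "0 < inner a z" using a(3) by blast
      then obtain p q where pq: "p \<in> D1" "q \<in> D2" "z = p - q" unfolding S_def by blast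
      obtain x1 t1 where "p = (x1, t1)" by (cases p)
      moreover obtain y1 s1 where "q = (y1, s1)" by (cases q)
      ultimately show ?thesis using that pq z D1_def D2_def aw by (auto simp: algebra_simps)
    qed
    have g: "\<gamma> < 0"
    proof (rule ccontr)
      assume "\<not> \<gamma> < 0"
      then consider "\<gamma> > 0" | "\<gamma> = 0" by linarith
      then show False
      proof cases
        case 1
        define T0 where "T0 = inner \<xi> (x0 - xbar) - \<epsilon>"
        have "0 \<le> inner w (x0 - x0) + \<gamma> * (T0 - (\<bar>T0\<bar> + 1))"
          using key[OF x0E1 x0E2, of "\<bar>T0\<bar> + 1"] T0_def by simp
        moreover have "\<gamma> * (T0 - (\<bar>T0\<bar> + 1)) < 0"
          using 1 by (intro mult_pos_neg) auto
        ultimately show False by simp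
      next
        case 2
        have k0: "0 \<le> inner w (x - y)" if "x \<in> E1" "y \<in> E2" for x y
          using key[OF that, of 1] 2 by simp
        obtain d where d: "d > 0" "x0 - d *\<^sub>R (x1 - x0) \<in> E1" using ri_step[OF x0r1 z1(1)] by blast
        obtain d' where d': "d' > 0" "x0 - d' *\<^sub>R (y1 - x0) \<in> E2" using ri_step[OF x0r2 z1(2)] by blast
        have "0 \<le> inner w ((x0 - d *\<^sub>R (x1 - x0)) - x0)" using k0[OF d(2) x0E2] .
        then have "0 \<le> - d * inner w (x1 - x0)" by (simp add: inner_diff_right)
        then have i1: "inner w (x1 - x0) \<le> 0" using d(1)
          by (simp add: mult_le_0_iff)
        have "0 \<le> inner w (x0 - (x0 - d' *\<^sub>R (y1 - x0)))" using k0[OF x0E1 d'(2)] .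
        then have "0 \<le> d' * inner w (y1 - x0)" by (simp add: inner_diff_right)
        then have i2: "0 \<le> inner w (y1 - x0)" using d'(1)
          by (simp add: zero_le_mult_iff)
        have "inner w (x1 - y1) = inner w (x1 - x0) - inner w (y1 - x0)"
          by (simp add: inner_diff_right)
        then show False using z1(3) 2 i1 i2 by simp
      qed
    qed
    define gg where "gg = - \<gamma>"
    have gg: "gg > 0" using g gg_def by simp
    define w' where "w' = (1 / gg) *\<^sub>R w"
    define u where "u = \<xi> - w'"
    define v where "v = w'"
    have ineqE: "inner u (x - xbar) + inner v (y - xbar) \<le> \<epsilon>" if "x \<in> E1" "y \<in> E2" for x y
    proof -
      define A where "A = inner w (x - y)"
      define T where "T = inner \<xi> (x - xbar) - \<epsilon>"
      have ks: "0 \<le> A - gg * T + gg * s" if "s > 0" for s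
        using key[OF \<open>x \<in> E1\<close> \<open>y \<in> E2\<close> that] unfolding A_def T_def gg_def
        by (simp add: algebra_simps)
      have AT: "0 \<le> A - gg * T"
      proof (rule ccontr)
        assume n: "\<not> 0 \<le> A - gg * T"
        define s where "s = (gg * T - A) / (2 * gg)"
        have "s > 0" using n gg unfolding s_def by (intro divide_pos_pos) auto
        then have "0 \<le> A - gg * T + gg * s" by (rule ks)
        moreover have "gg * s = (gg * T - A) / 2" unfolding s_def using gg by simp
        ultimately have "0 \<le> A - gg * T + (gg * T - A) / 2" by simp
        then have "0 \<le> (A - gg * T) / 2" by (simp add: field_simps)
        then show False using n by simp
      qed
      have "inner w' (x - y) = A / gg" unfolding w'_def A_def by simp
      moreover have "T \<le> A / gg" using AT gg by (simp add: field_simps)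
      ultimately have "T \<le> inner w' (x - y)" by simp
      moreover have "inner u (x - xbar) + inner v (y - xbar) = inner \<xi> (x - xbar) - inner w' (x - y)"
        unfolding u_def v_def by (simp add: inner_diff_left inner_diff_right)
      ultimately show ?thesis unfolding T_def by linarith
    qed
    have ext1: "inner u (x - xbar) + inner v (y - xbar) \<le> \<epsilon>" if "x \<in> \<Omega>1" "y \<in> E2" for x y
    proof -
      have "E1 \<subseteq> {x. inner u x \<le> \<epsilon> - inner v (y - xbar) + inner u xbar}"
      proof
        fix z assume "z \<in> E1"
        from ineqE[OF this that(2)] show "z \<in> {x. inner u x \<le> \<epsilon> - inner v (y - xbar) + inner u xbar}"
          by (simp add: inner_diff_right)
      qed
      then have "closure E1 \<subseteq> {x. inner u x \<le> \<epsilon> - inner v (y - xbar) + inner u xbar}"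
        by (rule closure_minimal) (rule closed_halfspace_le)
      then show ?thesis using that(1) E1(3) by (auto simp: inner_diff_right)
    qed
    have ext2: "inner u (x - xbar) + inner v (y - xbar) \<le> \<epsilon>" if "x \<in> \<Omega>1" "y \<in> \<Omega>2" for x y
    proof -
      have "E2 \<subseteq> {y. inner v y \<le> \<epsilon> - inner u (x - xbar) + inner v xbar}"
      proof
        fix z assume "z \<in> E2"
        from ext1[OF that(1) this] show "z \<in> {y. inner v y \<le> \<epsilon> - inner u (x - xbar) + inner v xbar}"
          by (simp add: inner_diff_right)
      qed
      then have "closure E2 \<subseteq> {y. inner v y \<le> \<epsilon> - inner u (x - xbar) + inner v xbar}"
        by (rule closure_minimal) (rule closed_halfspace_le)
      then show ?thesis using that(2) E2(3) by (auto simp: inner_diff_right)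
    qed
    have xb1: "xbar \<in> \<Omega>1" and xb2: "xbar \<in> \<Omega>2" using assms(5) by auto
    define F where "F = (\<lambda>x. inner u (x - xbar)) ` \<Omega>1"
    have bdd: "bdd_above F" unfolding F_def
      by (rule bdd_aboveI[of _ \<epsilon>]) (use ext2[OF _ xb2] in auto)
    have Fne: "F \<noteq> {}" using xb1 F_def by blast
    define a1 where "a1 = Sup F"
    have up: "inner u (x - xbar) \<le> a1" if "x \<in> \<Omega>1" for x
      unfolding a1_def using that bdd F_def by (auto intro: cSup_upper)
    have a1nn: "0 \<le> a1" using up[OF xb1] by simp
    have lo: "a1 \<le> \<epsilon> - inner v (y - xbar)" if "y \<in> \<Omega>2" for y
      unfolding a1_def using Fne
    proof (rule cSup_least)
      fix z assume "z \<in> F"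
      then show "z \<le> \<epsilon> - inner v (y - xbar)" using ext2[OF _ that] F_def by force
    qed
    have a1e: "a1 \<le> \<epsilon>" using lo[OF xb2] by simp
    have uN: "u \<in> eps_normal a1 xbar \<Omega>1" unfolding eps_normal_def using up by blast
    have vN: "v \<in> eps_normal (\<epsilon> - a1) xbar \<Omega>2" unfolding eps_normal_def using lo by force
    have "\<xi> = u + v" unfolding u_def v_def by simp
    then have mem: "\<xi> \<in> {u + v | u v. u \<in> eps_normal a1 xbar \<Omega>1 \<and> v \<in> eps_normal (\<epsilon> - a1) xbar \<Omega>2}"
      using uN vN by blast
    show "\<xi> \<in> (\<Union>(\<epsilon>1, \<epsilon>2) \<in> {(a, b). a \<ge> 0 \<and> b \<ge> 0 \<and> a + b = \<epsilon>}.
        {u + v | u v. u \<in> eps_normal \<epsilon>1 xbar \<Omega>1 \<and> v \<in> eps_normal \<epsilon>2 xbar \<Omega>2})"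
      by (rule UN_I[of "(a1, \<epsilon> - a1)"]) (use mem a1nn a1e in auto)
  qed
qed

end
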